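(* Let $R$, $D$ and $Proj:D\to P^{\neq}(\omega_2)$ be as defined in the context. Then: (1) if $r_0\ge r_1$ are both in $D$, then $Proj(r_0)\ge Proj(r_1)$ in $P^{\neq}(\omega_2)$; (2) if $r_0\in D$, $p_0=Proj(r_0)$ and $p_1\le p_0$ in $P^{\neq}(\omega_2)$, then there is $r_2\in D$ with $r_2\le r_0$ and $Proj(r_2)\le p_1$.
   Context: $P^{\neq}(\omega_2)$ is the poset of pairs $(p,n)$ where $n\in\omega$ and $p$ is a function with $dom(p)$ a finite subset of $\omega_2$ and $p(\alpha)\in{}^n\omega$ for every $\alpha\in dom(p)$, ordered by $(p_0,n_0)\ge(p_1,n_1)$ ($(p_1,n_1)$ stronger) iff $dom(p_0)\subseteq dom(p_1)$, $n_0\le n_1$, $p_0(\alpha)\subseteq p_1(\alpha)$ for every $\alpha\in dom(p_0)$, and for every $i$ with $n_0\le i<n_1$ and all $\beta\neq\alpha$ in $dom(p_0)$, $p_1(\beta)(i)\neq p_1(\alpha)(i)$. $R$ is the set of functions $r$ with $dom(r)$ a finite subset of $(\omega_2\times 2)\cup\{\omega_2\}$ such that $r(\alpha,0)\in{}^{<\omega}\omega$ whenever $(\alpha,0)\in dom(r)$, $r(\alpha,1)\in\omega$ whenever $(\alpha,1)\in dom(r)$, and (if $\omega_2\in dom(r)$) $r(\omega_2)$ is a finite partial function from ${}^{<\omega}\omega$ to $\omega$ which is one-to-one on each ${}^n\omega$. $R$ is ordered by $r_0\ge r_1$ iff $dom(r_0)\subseteq dom(r_1)$, $r_0(\alpha,0)\subseteq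 r_1(\alpha,0)$, $r_0(\alpha,1)=r_1(\alpha,1)$ and $r_0(\omega_2)\subseteq r_1(\omega_2)$ whenever these are defined for $r_0$. $D$ is the set of $r\in R$ such that $\omega_2\in dom(r)$, there is at least one $\alpha$ with $(\alpha,0)\in dom(r)$, $(\alpha,0)\in dom(r)$ iff $(\alpha,1)\in dom(r)$, and there is $n_r\in\omega$ such that the $r(\alpha,0)$ (for $(\alpha,0)\in dom(r)$) are pairwise distinct elements of ${}^{n_r}\omega$, $r(\alpha,1)\le n_r$, and $dom(r(\omega_2))=\{\sigma\in{}^{<\omega}\omega:\exists\alpha\ \sigma\subseteq r(\alpha,0)\}$. For $r\in D$, $Proj(r)=(p,n_r)$ where $dom(p)=\{\alpha:(\alpha,0)\in dom(r)\}$ and for $\alpha\in dom(p)$ and $n<n_r$: $p(\alpha)(n)=r(\alpha,0)(n)$ if $n<r(\alpha,1)$, and $p(\alpha)(n)=r(\omega_2)(r(\alpha,0)\restriction(n+1))$ if $r(\alpha,1)\le n<n_r$. *)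

theory Defs
  imports Main "HOL-Library.Sublist"
begin

text \<open>The index set omega_2 is represented by a type 'a whose cardinality is
  the second successor cardinal of aleph_0. Finite sequences in omega^{<omega} are
  lists of naturals; omega^n is the set of lists of length n.
  A condition of R is a triple (r0, r1, rt): r0 alpha = r(alpha,0), r1 alpha = r(alpha,1),
  rt = Some f iff omega_2 is in dom r, with r(omega_2) = f.\<close>

definition is_omega2_type :: "'a itself \<Rightarrow> bool" where
  "is_omega2_type _ \<longleftrightarrow>
     (card_of (UNIV :: 'a set), cardSuc (cardSuc (card_of (UNIV :: nat set)))) \<in> ordIso"

type_synonym 'a Pcond = "('a \<rightharpoonup> nat list) \<times> nat"
type_synonym 'a Rcond = "('a \<rightharpoonup> nat list) \<times> ('a \<rightharpoonup> nat) \<times> ((nat list \<rightharpoonup> nat) option)"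

definition Pneq :: "'a Pcond set" where
  "Pneq = {(p, n). finite (dom p) \<and> (\<forall>\<alpha>\<in>dom p. length (the (p \<alpha>)) = n)}"

definition P_le :: "'a Pcond \<Rightarrow> 'a Pcond \<Rightarrow> bool" where
  "P_le q p \<longleftrightarrow> (case p of (p0, n0) \<Rightarrow> case q of (p1, n1) \<Rightarrow>
      dom p0 \<subseteq> dom p1 \<and> n0 \<le> n1 \<and>
      (\<forall>\<alpha>\<in>dom p0. prefix (the (p0 \<alpha>)) (the (p1 \<alpha>))) \<and>
      (\<forall>i. n0 \<le> i \<and> i < n1 \<longrightarrow>
         (\<forall>\<alpha>\<in>dom p0. \<forall>\<beta>\<in>dom p0. \<beta> \<noteq> \<alpha> \<longrightarrow>
            the (p1 \<beta>) ! i \<noteq> the (p1 \<alpha>) ! i)))"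

definition Rset :: "'a Rcond set" where
  "Rset = {(r0, r1, rt). finite (dom r0) \<and> finite (dom r1) \<and>
     (\<forall>f. rt = Some f \<longrightarrow> finite (dom f) \<and>
        (\<forall>\<sigma>\<in>dom f. \<forall>\<tau>\<in>dom f. length \<sigma> = length \<tau> \<and> f \<sigma> = f \<tau> \<longrightarrow> \<sigma> = \<tau>))}"

definition R_le :: "'a Rcond \<Rightarrow> 'a Rcond \<Rightarrow> bool" where
  "R_le s r \<longleftrightarrow> (case r of (r0, r1, rt) \<Rightarrow> case s of (s0, s1, st) \<Rightarrow>
      dom r0 \<subseteq> dom s0 \<and> dom r1 \<subseteq> dom s1 \<and>
      (\<forall>\<alpha>\<in>dom r0. prefix (the (r0 \<alpha>)) (the (s0 \<alpha>))) \<and>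
      (\<forall>\<alpha>\<in>dom r1. r1 \<alpha> = s1 \<alpha>) \<and>
      (\<forall>f. rt = Some f \<longrightarrow> (\<exists>g. st = Some g \<and> f \<subseteq>\<^sub>m g)))"

definition Dset :: "'a Rcond set" where
  "Dset = {(r0, r1, rt). (r0, r1, rt) \<in> Rset \<and> rt \<noteq> None \<and> dom r0 \<noteq> {} \<and>
     dom r0 = dom r1 \<and>
     (\<exists>n. (\<forall>\<alpha>\<in>dom r0. length (the (r0 \<alpha>)) = n \<and> the (r1 \<alpha>) \<le> n) \<and>
          inj_on (\<lambda>\<alpha>. the (r0 \<alpha>)) (dom r0) \<and>
          dom (the rt) = {\<sigma>. \<exists>\<alpha>\<in>dom r0. prefix \<sigma> (the (r0 \<alpha>))})}"

text \<open>n_r: the common length of the r(alpha,0) (well defined for r in D).\<close>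
definition n_of :: "'a Rcond \<Rightarrow> nat" where
  "n_of r = (case r of (r0, r1, rt) \<Rightarrow> length (the (r0 (SOME \<alpha>. \<alpha> \<in> dom r0))))"

definition Proj :: "'a Rcond \<Rightarrow> 'a Pcond" where
  "Proj r = (case r of (r0, r1, rt) \<Rightarrow>
     ((\<lambda>\<alpha>. if \<alpha> \<in> dom r0 then
          Some (map (\<lambda>i. if i < the (r1 \<alpha>) then the (r0 \<alpha>) ! i
                         else the (the rt (take (i + 1) (the (r0 \<alpha>))))) [0..<n_of r])
        else None),
      n_of r))"

end

theory Submission
  imports Defs "HOL-Library.Countable"
begin

lemma prefix_take_iff: "prefix xs ys \<longleftrightarrow> take (length xs) ys = xs"
  by (metis append_eq_conv_conj prefix_def)

lemma Dset_n:
  assumes "(a,b,t) \<in> Dset"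
  shows "\<forall>\<alpha>\<in>dom a. length (the (a \<alpha>)) = n_of (a,b,t) \<and> the (b \<alpha>) \<le> n_of (a,b,t)"
proof -
  obtain n where n: "\<forall>\<alpha>\<in>dom a. length (the (a \<alpha>)) = n \<and> the (b \<alpha>) \<le> n" and ne: "dom a \<noteq> {}"
    using assms unfolding Dset_def by auto
  have "(SOME \<alpha>. \<alpha> \<in> dom a) \<in> dom a" using ne by (meson ex_in_conv someI_ex)
  then have "n_of (a,b,t) = n" using n unfolding n_of_def by auto
  then show ?thesis using n by auto
qed

lemma Proj_fst: "fst (Proj (a,b,t)) \<alpha> = (if \<alpha> \<in> dom a then
          Some (map (\<lambda>i. if i < the (b \<alpha>) then the (a \<alpha>) ! i
                         else the (the t (take (i + 1) (the (a \<alpha>))))) [0..<n_of (a,b,t)])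
        else None)"
  unfolding Proj_def by simp

lemma Proj_snd: "snd (Proj (a,b,t)) = n_of (a,b,t)"
  unfolding Proj_def by simp

lemma part1:
  assumes D0: "(a0,b0,t0) \<in> Dset" and D1: "(a1,b1,t1) \<in> Dset" and le: "R_le (a1,b1,t1) (a0,b0,t0)"
  shows "P_le (Proj (a1,b1,t1)) (Proj (a0,b0,t0))"
proof -
  define n0 where "n0 = n_of (a0,b0,t0)"
  define n1 where "n1 = n_of (a1,b1,t1)"
  have L0: "\<forall>\<alpha>\<in>dom a0. length (the (a0 \<alpha>)) = n0 \<and> the (b0 \<alpha>) \<le> n0" using Dset_n[OF D0] n0_def by simp
  have L1: "\<forall>\<alpha>\<in>dom a1. length (the (a1 \<alpha>)) = n1 \<and> the (b1 \<alpha>) \<le> n1" using Dset_n[OF D1] n1_def by simp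
  obtain f0 where f0: "t0 = Some f0" using D0 unfolding Dset_def by auto
  obtain g where g: "t1 = Some g" and fg: "f0 \<subseteq>\<^sub>m g" using le f0 unfolding R_le_def by auto
  have domf0: "dom f0 = {\<sigma>. \<exists>\<alpha>\<in>dom a0. prefix \<sigma> (the (a0 \<alpha>))}" and ne0: "dom a0 \<noteq> {}"
    and db0: "dom a0 = dom b0" and inj0: "inj_on (\<lambda>\<alpha>. the (a0 \<alpha>)) (dom a0)"
    using D0 f0 unfolding Dset_def by auto
  have domg: "dom g = {\<sigma>. \<exists>\<alpha>\<in>dom a1. prefix \<sigma> (the (a1 \<alpha>))}" and db1: "dom a1 = dom b1"
    using D1 g unfolding Dset_def by auto
  have ginj: "\<And>\<sigma> \<tau>. \<sigma> \<in> dom g \<Longrightarrow> \<tau> \<in> dom g \<Longrightarrow> length \<sigma> = length \<tau> \<Longrightarrow> g \<sigma> = g \<tau> \<Longrightarrow> \<sigma> = \<tau>"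
    using D1 g unfolding Dset_def Rset_def by auto
  have sub: "dom a0 \<subseteq> dom a1" and pre: "\<forall>\<alpha>\<in>dom a0. prefix (the (a0 \<alpha>)) (the (a1 \<alpha>))"
    and beq: "\<forall>\<alpha>\<in>dom b0. b0 \<alpha> = b1 \<alpha>"
    using le unfolding R_le_def by auto
  have tk: "take k (the (a1 \<alpha>)) = take k (the (a0 \<alpha>))" if "\<alpha> \<in> dom a0" "k \<le> n0" for \<alpha> k
    using pre that L0 by (metis min.absorb1 prefix_take_iff take_take)
  have n01: "n0 \<le> n1"
  proof -
    obtain \<alpha> where "\<alpha> \<in> dom a0" using ne0 by auto
    then show ?thesis using pre L0 L1 sub by (metis prefix_length_le subsetD)
  qed
  define F0 where "F0 \<alpha> i = (if i < the (b0 \<alpha>) then the (a0 \<alpha>) ! i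
                         else the (f0 (take (i + 1) (the (a0 \<alpha>)))))" for \<alpha> i
  define F1 where "F1 \<alpha> i = (if i < the (b1 \<alpha>) then the (a1 \<alpha>) ! i
                         else the (g (take (i + 1) (the (a1 \<alpha>)))))" for \<alpha> i
  have P0: "fst (Proj (a0,b0,t0)) = (\<lambda>\<alpha>. if \<alpha> \<in> dom a0 then Some (map (F0 \<alpha>) [0..<n0]) else None)"
    using Proj_fst[of a0 b0 t0] f0 unfolding F0_def n0_def by auto
  have P1: "fst (Proj (a1,b1,t1)) = (\<lambda>\<alpha>. if \<alpha> \<in> dom a1 then Some (map (F1 \<alpha>) [0..<n1]) else None)"
    using Proj_fst[of a1 b1 t1] g unfolding F1_def n1_def by auto
  have FF: "F0 \<alpha> i = F1 \<alpha> i" if "\<alpha> \<in> dom a0" "i < n0" for \<alpha> i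
  proof -
    have bb: "the (b0 \<alpha>) = the (b1 \<alpha>)" using beq db0 that by auto
    have t: "take (i+1) (the (a1 \<alpha>)) = take (i+1) (the (a0 \<alpha>))" using tk that by auto
    show ?thesis
    proof (cases "i < the (b0 \<alpha>)")
      case True
      then show ?thesis unfolding F0_def F1_def using bb t
        by (metis less_add_one nth_take)
    next
      case False
      have "take (i+1) (the (a0 \<alpha>)) \<in> dom f0" using domf0 that take_is_prefix by blast
      then have "g (take (i+1) (the (a0 \<alpha>))) = f0 (take (i+1) (the (a0 \<alpha>)))" using fg
        by (metis map_le_def)
      then show ?thesis unfolding F0_def F1_def using bb t False by simp
    qed
  qed
  have F1g: "F1 \<alpha> i = the (g (take (i + 1) (the (a1 \<alpha>))))" if "\<alpha> \<in> dom a0" "n0 \<le> i" for \<alpha> i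
  proof -
    have "the (b1 \<alpha>) \<le> n0" using that L0 beq db0 by (metis domIff)
    then show ?thesis using that unfolding F1_def by auto
  qed
  define Q0 where "Q0 = (\<lambda>\<alpha>. if \<alpha> \<in> dom a0 then Some (map (F0 \<alpha>) [0..<n0]) else None)"
  define Q1 where "Q1 = (\<lambda>\<alpha>. if \<alpha> \<in> dom a1 then Some (map (F1 \<alpha>) [0..<n1]) else None)"
  have PP0: "Proj (a0,b0,t0) = (Q0, n0)" using P0 Proj_snd[of a0 b0 t0] n0_def Q0_def
    by (metis prod.collapse)
  have PP1: "Proj (a1,b1,t1) = (Q1, n1)" using P1 Proj_snd[of a1 b1 t1] n1_def Q1_def
    by (metis prod.collapse)
  have dQ0: "dom Q0 = dom a0" unfolding Q0_def by (auto split: if_splits)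
  have Q0a: "\<alpha> \<in> dom a0 \<Longrightarrow> the (Q0 \<alpha>) = map (F0 \<alpha>) [0..<n0]" for \<alpha> unfolding Q0_def by simp
  have Q1a: "\<alpha> \<in> dom a0 \<Longrightarrow> the (Q1 \<alpha>) = map (F1 \<alpha>) [0..<n1]" for \<alpha> using sub unfolding Q1_def by auto
  have Q1b: "\<alpha> \<in> dom a0 \<Longrightarrow> i < n1 \<Longrightarrow> the (Q1 \<alpha>) ! i = F1 \<alpha> i" for \<alpha> i using Q1a by simp
  show ?thesis
    unfolding P_le_def PP0 PP1 prod.case dQ0
  proof (intro conjI)
    show "dom a0 \<subseteq> dom Q1"
      using sub unfolding Q1_def by (auto split: if_splits simp: domIff)
    show "n0 \<le> n1" by (rule n01)
    show "\<forall>\<alpha>\<in>dom a0. prefix (the (Q0 \<alpha>)) (the (Q1 \<alpha>))"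
    proof
      fix \<alpha> assume a: "\<alpha> \<in> dom a0"
      have "map (F1 \<alpha>) [0..<n1] = map (F1 \<alpha>) [0..<n0] @ map (F1 \<alpha>) [n0..<n1]"
        using n01 by (metis map_append le_Suc_ex upt_add_eq_append zero_le)
      moreover have "map (F0 \<alpha>) [0..<n0] = map (F1 \<alpha>) [0..<n0]" using FF a by auto
      ultimately show "prefix (the (Q0 \<alpha>)) (the (Q1 \<alpha>))" using Q0a Q1a a by (simp add: prefixI)
    qed
    show "\<forall>i. n0 \<le> i \<and> i < n1 \<longrightarrow> (\<forall>\<alpha>\<in>dom a0. \<forall>\<beta>\<in>dom a0. \<beta> \<noteq> \<alpha> \<longrightarrow> the (Q1 \<beta>) ! i \<noteq> the (Q1 \<alpha>) ! i)"
    proof (intro allI impI ballI)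
      fix i \<alpha> \<beta> assume i: "n0 \<le> i \<and> i < n1" and a: "\<alpha> \<in> dom a0" and b: "\<beta> \<in> dom a0" and ne: "\<beta> \<noteq> \<alpha>"
      show "the (Q1 \<beta>) ! i \<noteq> the (Q1 \<alpha>) ! i"
        unfolding Q1b[OF a conjunct2[OF i]] Q1b[OF b conjunct2[OF i]]
      proof
        assume eq: "F1 \<beta> i = F1 \<alpha> i"
        define s where "s = take (i+1) (the (a1 \<alpha>))"
        define u where "u = take (i+1) (the (a1 \<beta>))"
        have sd: "s \<in> dom g" using domg a sub s_def take_is_prefix by blast
        have ud: "u \<in> dom g" using domg b sub u_def take_is_prefix by blast
        have ls: "length s = i+1" using s_def L1 a sub i by (simp add: subset_iff)
        have lu: "length u = i+1" using u_def L1 b sub i by (simp add: subset_iff)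
        have "the (g u) = the (g s)" using eq F1g[OF a] F1g[OF b] i s_def u_def by simp
        then have "g u = g s" using sd ud by auto
        then have "u = s" using ginj sd ud ls lu by auto
        then have "take n0 u = take n0 s" by simp
        then have "take n0 (the (a1 \<beta>)) = take n0 (the (a1 \<alpha>))" using i u_def s_def by simp
        then have "the (a0 \<beta>) = the (a0 \<alpha>)" using tk[OF a] tk[OF b] L0 a b by simp
        then show False using inj0 a b ne by (meson inj_onD)
      qed
    qed
  qed
qed


lemma Proj_eq: "Proj (a,b,Some f) = ((\<lambda>\<alpha>. if \<alpha> \<in> dom a then
          Some (map (\<lambda>i. if i < the (b \<alpha>) then the (a \<alpha>) ! i
                         else the (f (take (i + 1) (the (a \<alpha>))))) [0..<n_of (a,b,Some f)])
        else None), n_of (a,b,Some f))"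
  unfolding Proj_def by (simp only: prod.case option.sel)

lemma part2:
  assumes D0: "(a0,b0,t0) \<in> Dset" and Pq: "(q,m) \<in> Pneq" and le: "P_le (q,m) (Proj (a0,b0,t0))"
  shows "\<exists>r2\<in>Dset. R_le r2 (a0,b0,t0) \<and> P_le (Proj r2) (q,m)"
proof -
  define n0 where "n0 = n_of (a0,b0,t0)"
  have L0: "\<forall>\<alpha>\<in>dom a0. length (the (a0 \<alpha>)) = n0 \<and> the (b0 \<alpha>) \<le> n0" using Dset_n[OF D0] n0_def by simp
  obtain f0 where f0: "t0 = Some f0" using D0 unfolding Dset_def by auto
  have domf0: "dom f0 = {\<sigma>. \<exists>\<alpha>\<in>dom a0. prefix \<sigma> (the (a0 \<alpha>))}" and ne0: "dom a0 \<noteq> {}"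
    and db0: "dom a0 = dom b0" and inj0: "inj_on (\<lambda>\<alpha>. the (a0 \<alpha>)) (dom a0)"
    using D0 f0 unfolding Dset_def by auto
  have fina0: "finite (dom a0)" using D0 unfolding Dset_def Rset_def by auto
  have pfin: "finite {\<sigma>. prefix \<sigma> xs}" for xs :: "nat list"
  proof -
    have "{\<sigma>. prefix \<sigma> xs} = set (prefixes xs)" by auto
    then show ?thesis by simp
  qed
  have finf0: "finite (dom f0)" unfolding domf0 using fina0 pfin by auto
  have f0inj: "\<And>\<sigma> \<tau>. \<sigma> \<in> dom f0 \<Longrightarrow> \<tau> \<in> dom f0 \<Longrightarrow> length \<sigma> = length \<tau> \<Longrightarrow> f0 \<sigma> = f0 \<tau> \<Longrightarrow> \<sigma> = \<tau>"
    using D0 f0 unfolding Dset_def Rset_def by auto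
  have finq: "finite (dom q)" and lq: "\<forall>\<alpha>\<in>dom q. length (the (q \<alpha>)) = m"
    using Pq unfolding Pneq_def by auto
  define F0 where "F0 \<alpha> i = (if i < the (b0 \<alpha>) then the (a0 \<alpha>) ! i
                         else the (f0 (take (i + 1) (the (a0 \<alpha>)))))" for \<alpha> i
  define Q0 where "Q0 = (\<lambda>\<alpha>. if \<alpha> \<in> dom a0 then Some (map (F0 \<alpha>) [0..<n0]) else None)"
  have PP0: "Proj (a0,b0,t0) = (Q0, n0)" unfolding f0 Proj_eq Q0_def F0_def n0_def f0 by simp
  have dQ0: "dom Q0 = dom a0" unfolding Q0_def by (auto split: if_splits)
  have subq: "dom a0 \<subseteq> dom q" and n0m: "n0 \<le> m"
    and preq: "\<forall>\<alpha>\<in>dom a0. prefix (map (F0 \<alpha>) [0..<n0]) (the (q \<alpha>))"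
    and distq: "\<forall>i. n0 \<le> i \<and> i < m \<longrightarrow> (\<forall>\<alpha>\<in>dom a0. \<forall>\<beta>\<in>dom a0. \<beta> \<noteq> \<alpha> \<longrightarrow> the (q \<beta>) ! i \<noteq> the (q \<alpha>) ! i)"
  proof -
    have Q0a: "\<alpha> \<in> dom a0 \<Longrightarrow> the (Q0 \<alpha>) = map (F0 \<alpha>) [0..<n0]" for \<alpha> unfolding Q0_def by simp
    have "dom Q0 \<subseteq> dom q \<and> n0 \<le> m \<and> (\<forall>\<alpha>\<in>dom Q0. prefix (the (Q0 \<alpha>)) (the (q \<alpha>))) \<and>
      (\<forall>i. n0 \<le> i \<and> i < m \<longrightarrow> (\<forall>\<alpha>\<in>dom Q0. \<forall>\<beta>\<in>dom Q0. \<beta> \<noteq> \<alpha> \<longrightarrow> the (q \<beta>) ! i \<noteq> the (q \<alpha>) ! i))"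
      using le unfolding P_le_def PP0 by simp
    then show "dom a0 \<subseteq> dom q" "n0 \<le> m" "\<forall>\<alpha>\<in>dom a0. prefix (map (F0 \<alpha>) [0..<n0]) (the (q \<alpha>))"
      "\<forall>i. n0 \<le> i \<and> i < m \<longrightarrow> (\<forall>\<alpha>\<in>dom a0. \<forall>\<beta>\<in>dom a0. \<beta> \<noteq> \<alpha> \<longrightarrow> the (q \<beta>) ! i \<noteq> the (q \<alpha>) ! i)"
      unfolding dQ0 using Q0a by auto
  qed
  have F0q: "F0 \<alpha> i = the (q \<alpha>) ! i" if "\<alpha> \<in> dom a0" "i < n0" for \<alpha> i
    using preq that by (metis (no_types, lifting) diff_zero length_map length_upt nth_map_upt add_0 prefix_take_iff nth_take)
  obtain h :: "'a \<Rightarrow> nat" where h: "inj_on h (dom q)"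
    using ex_bij_betw_finite_nat[OF finq] bij_betw_imp_inj_on by blast
  define w where "w \<alpha> = (if \<alpha> \<in> dom a0 then the (a0 \<alpha>) @ replicate (m+1-n0) 0 else the (q \<alpha>) @ [Suc (h \<alpha>)])" for \<alpha>
  define A2 where "A2 = (\<lambda>\<alpha>. if \<alpha> \<in> dom q then Some (w \<alpha>) else None)"
  define B2 where "B2 = (\<lambda>\<alpha>. if \<alpha> \<in> dom a0 then b0 \<alpha> else if \<alpha> \<in> dom q then Some (m+1) else None)"
  define Prefs where "Prefs = {\<sigma>. \<exists>\<alpha>\<in>dom q. prefix \<sigma> (w \<alpha>)}"
  define S where "S = {0} \<union> ran f0 \<union> (\<Union>\<alpha>\<in>dom q. set (the (q \<alpha>))) \<union> Suc ` h ` dom q"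
  define Kp where "Kp = Suc (Max S)"
  define isExt where "isExt \<sigma> = (\<exists>\<alpha>\<in>dom a0. prefix \<sigma> (w \<alpha>) \<and> n0 < length \<sigma> \<and> length \<sigma> \<le> m)" for \<sigma>
  define sel where "sel \<sigma> = (SOME \<alpha>. \<alpha>\<in>dom a0 \<and> prefix \<sigma> (w \<alpha>))" for \<sigma>
  define G where "G \<sigma> = (if \<sigma> \<notin> Prefs then None else if \<sigma> \<in> dom f0 then f0 \<sigma>
     else if isExt \<sigma> then Some (the (q (sel \<sigma>)) ! (length \<sigma> - 1)) else Some (Kp + to_nat \<sigma>))" for \<sigma>
  define r2 where "r2 = (A2, B2, Some G)"
  have finS: "finite S" unfolding S_def using finf0 finq by (auto intro: finite_ran)
  have SK: "x \<in> S \<Longrightarrow> x < Kp" for x unfolding Kp_def using finS by (simp add: le_imp_less_Suc)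
  have dA2: "dom A2 = dom q" unfolding A2_def by (auto split: if_splits)
  have dB2: "dom B2 = dom q"
  proof (rule set_eqI)
    fix x show "x \<in> dom B2 \<longleftrightarrow> x \<in> dom q"
    proof (cases "x \<in> dom a0")
      case True then show ?thesis using subq db0 unfolding B2_def by auto
    next
      case False
      then have "B2 x = (if x \<in> dom q then Some (m+1) else None)" unfolding B2_def by presburger
      then show ?thesis by (auto split: if_splits)
    qed
  qed
  have wA: "w \<alpha> = the (a0 \<alpha>) @ replicate (m+1-n0) 0" if "\<alpha> \<in> dom a0" for \<alpha>
    using that unfolding w_def by simp
  have wB: "w \<alpha> = the (q \<alpha>) @ [Suc (h \<alpha>)]" if "\<alpha> \<notin> dom a0" for \<alpha>
    using that unfolding w_def by simp
  have lw: "length (w \<alpha>) = m+1" if "\<alpha> \<in> dom q" for \<alpha>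
  proof (cases "\<alpha> \<in> dom a0")
    case True
    then have "length (the (a0 \<alpha>)) = n0" using L0 by blast
    then show ?thesis using wA[OF True] n0m by simp
  next
    case False
    then have "length (the (q \<alpha>)) = m" using lq that by blast
    then show ?thesis using wB[OF False] by simp
  qed
  have wold: "take n0 (w \<alpha>) = the (a0 \<alpha>)" if "\<alpha> \<in> dom a0" for \<alpha>
  proof -
    have "length (the (a0 \<alpha>)) = n0" using L0 that by blast
    then show ?thesis using wA[OF that] by simp
  qed
  have pold: "prefix (the (a0 \<alpha>)) (w \<alpha>)" if "\<alpha> \<in> dom a0" for \<alpha>
    using wA[OF that] by (simp add: prefixI)
  have lastA: "last (w \<alpha>) = 0" if "\<alpha> \<in> dom a0" for \<alpha>
  proof -
    have "m+1-n0 > 0" using n0m by simp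
    then show ?thesis using wA[OF that] by simp
  qed
  have lastB: "last (w \<alpha>) = Suc (h \<alpha>)" if "\<alpha> \<notin> dom a0" for \<alpha>
    using wB[OF that] by simp
  have winj: "inj_on w (dom q)"
  proof (rule inj_onI)
    fix \<alpha> \<beta> assume a: "\<alpha> \<in> dom q" and b: "\<beta> \<in> dom q" and e: "w \<alpha> = w \<beta>"
    show "\<alpha> = \<beta>"
    proof (cases "\<alpha> \<in> dom a0")
      case True
      have bb: "\<beta> \<in> dom a0"
      proof (rule ccontr)
        assume "\<beta> \<notin> dom a0"
        then show False using lastA[OF True] lastB e by simp
      qed
      have "the (a0 \<alpha>) = the (a0 \<beta>)" using wold[OF True] wold[OF bb] e by simp
      then show ?thesis using inj_onD[OF inj0, of \<alpha> \<beta>] True bb by simp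
    next
      case False
      have bb: "\<beta> \<notin> dom a0"
      proof
        assume "\<beta> \<in> dom a0"
        then show False using lastA lastB[OF False] e by simp
      qed
      have "h \<alpha> = h \<beta>" using lastB[OF False] lastB[OF bb] e by simp
      then show ?thesis using h a b by (simp add: inj_on_eq_iff)
    qed
  qed
  have domf0P: "dom f0 \<subseteq> Prefs"
    unfolding domf0 Prefs_def using pold subq prefix_order.trans by blast
  have lf0: "\<sigma> \<in> dom f0 \<Longrightarrow> length \<sigma> \<le> n0" for \<sigma>
    unfolding domf0 using L0 prefix_length_le by fastforce
  have uniq: "\<alpha> = \<beta>" if "\<alpha> \<in> dom a0" "\<beta> \<in> dom a0" "prefix \<sigma> (w \<alpha>)" "prefix \<sigma> (w \<beta>)" "n0 \<le> length \<sigma>" for \<alpha> \<beta> \<sigma>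
  proof -
    have "take n0 \<sigma> = take n0 (w \<alpha>)" "take n0 \<sigma> = take n0 (w \<beta>)" using that
      by (metis min.absorb1 prefix_take_iff take_take)+
    then show ?thesis using wold that inj0 by (metis (mono_tags, lifting) inj_onD)
  qed
  have Gext: "G (take (i+1) (w \<alpha>)) = Some (the (q \<alpha>) ! i)" if "\<alpha> \<in> dom a0" "n0 \<le> i" "i < m" for \<alpha> i
  proof -
    let ?s = "take (i+1) (w \<alpha>)"
    have aq: "\<alpha> \<in> dom q" using that subq by auto
    have ls: "length ?s = i+1" using lw[OF aq] that by simp
    have pr: "prefix ?s (w \<alpha>)" by (rule take_is_prefix)
    have "?s \<in> Prefs" unfolding Prefs_def using aq pr by blast
    moreover have "?s \<notin> dom f0" using lf0 ls that by fastforce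
    moreover have "isExt ?s" unfolding isExt_def using that pr ls by auto
    moreover have "sel ?s = \<alpha>"
    proof -
      have "\<exists>\<beta>. \<beta>\<in>dom a0 \<and> prefix ?s (w \<beta>)" using that pr by blast
      then have "sel ?s \<in> dom a0 \<and> prefix ?s (w (sel ?s))" unfolding sel_def by (rule someI_ex)
      then show ?thesis using uniq[of "sel ?s" \<alpha> ?s] that pr ls by auto
    qed
    ultimately show ?thesis unfolding G_def using ls by simp
  qed
  have Gtop: "G (w \<alpha>) = Some (Kp + to_nat (w \<alpha>))" if "\<alpha> \<in> dom a0" for \<alpha>
  proof -
    have aq: "\<alpha> \<in> dom q" using that subq by auto
    have "w \<alpha> \<in> Prefs" unfolding Prefs_def using aq by blast
    moreover have "w \<alpha> \<notin> dom f0" using lf0 lw[OF aq] n0m by fastforce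
    moreover have "\<not> isExt (w \<alpha>)" unfolding isExt_def using lw[OF aq] by auto
    ultimately show ?thesis unfolding G_def by simp
  qed
  have Gf0: "G \<sigma> = f0 \<sigma>" if "\<sigma> \<in> dom f0" for \<sigma> using that domf0P unfolding G_def by auto
  have dG: "dom G = Prefs" unfolding G_def by (auto split: if_splits)
  have qS: "the (q \<alpha>) ! i \<in> S" if "\<alpha> \<in> dom q" "i < m" for \<alpha> i
  proof -
    have "i < length (the (q \<alpha>))" using that lq by simp
    then have "the (q \<alpha>) ! i \<in> set (the (q \<alpha>))" by (rule nth_mem)
    then have "the (q \<alpha>) ! i \<in> (\<Union>\<alpha>\<in>dom q. set (the (q \<alpha>)))" using that(1) by blast
    then show ?thesis unfolding S_def by blast
  qed
  have GN: "G \<sigma> = Some (Kp + to_nat \<sigma>)" if "\<sigma> \<in> Prefs" "\<sigma> \<notin> dom f0" "\<not> isExt \<sigma>" for \<sigma>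
    using that unfolding G_def by simp
  have GE: "\<exists>\<alpha>\<in>dom a0. prefix \<sigma> (w \<alpha>) \<and> n0 < length \<sigma> \<and> length \<sigma> \<le> m \<and>
              G \<sigma> = Some (the (q \<alpha>) ! (length \<sigma> - 1))"
    if GEa: "\<sigma> \<in> Prefs" "\<sigma> \<notin> dom f0" "isExt \<sigma>" for \<sigma>
  proof -
    obtain \<beta> where b: "\<beta>\<in>dom a0" "prefix \<sigma> (w \<beta>)" "n0 < length \<sigma>" "length \<sigma> \<le> m"
      using GEa(3) unfolding isExt_def by blast
    have "\<exists>\<beta>. \<beta>\<in>dom a0 \<and> prefix \<sigma> (w \<beta>)" using b by blast
    then have s: "sel \<sigma> \<in> dom a0 \<and> prefix \<sigma> (w (sel \<sigma>))" unfolding sel_def by (rule someI_ex)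
    have "G \<sigma> = Some (the (q (sel \<sigma>)) ! (length \<sigma> - 1))" using GEa unfolding G_def by simp
    then show ?thesis using s b by blast
  qed
  have f0K: "v < Kp" if "f0 \<sigma> = Some v" for \<sigma> v
  proof -
    have "v \<in> ran f0" using that by (rule ranI)
    then show ?thesis using SK unfolding S_def by blast
  qed
  have extlen: "n0 < length \<sigma>" if "isExt \<sigma>" for \<sigma> using that unfolding isExt_def by blast
  have Ginj: "\<sigma> = \<tau>" if st: "\<sigma> \<in> dom G" "\<tau> \<in> dom G" "length \<sigma> = length \<tau>" "G \<sigma> = G \<tau>" for \<sigma> \<tau>
  proof -
    have sP: "\<sigma> \<in> Prefs" and tP: "\<tau> \<in> Prefs" using st dG by auto
    have mixed: False if A: "x \<in> dom f0" "y \<in> Prefs" "y \<notin> dom f0" "length x = length y" "G x = G y" for x y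
    proof -
      obtain v where v: "f0 x = Some v" using A(1) by auto
      have Gx: "G x = Some v" using Gf0[OF A(1)] v by simp
      show False
      proof (cases "isExt y")
        case True
        then show False using extlen[OF True] lf0[OF A(1)] A(4) by simp
      next
        case False
        then show False using GN[OF A(2) A(3) False] Gx A(5) f0K[OF v] by simp
      qed
    qed
    show ?thesis
    proof (cases "\<sigma> \<in> dom f0")
      case True
      show ?thesis
      proof (cases "\<tau> \<in> dom f0")
        case True2: True
        then show ?thesis using f0inj[OF True True2 st(3)] st(4) Gf0[OF True] Gf0[OF True2] by simp
      next
        case False
        then show ?thesis using mixed[OF True tP False st(3) st(4)] by simp
      qed
    next
      case False
      show ?thesis
      proof (cases "\<tau> \<in> dom f0")
        case True2: True
        then show ?thesis using mixed[OF True2 sP False st(3)[symmetric] st(4)[symmetric]] by simp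
      next
        case False2: False
        show ?thesis
        proof (cases "isExt \<sigma>")
          case E1: True
          obtain \<alpha> where a: "\<alpha>\<in>dom a0" "prefix \<sigma> (w \<alpha>)" "n0 < length \<sigma>" "length \<sigma> \<le> m"
              "G \<sigma> = Some (the (q \<alpha>) ! (length \<sigma> - 1))" using GE[OF sP False E1] by blast
          show ?thesis
          proof (cases "isExt \<tau>")
            case E2: True
            obtain \<beta> where b: "\<beta>\<in>dom a0" "prefix \<tau> (w \<beta>)" "n0 < length \<tau>" "length \<tau> \<le> m"
              "G \<tau> = Some (the (q \<beta>) ! (length \<tau> - 1))" using GE[OF tP False2 E2] by blast
            have eqv: "the (q \<alpha>) ! (length \<sigma> - 1) = the (q \<beta>) ! (length \<sigma> - 1)"
              using a(5) b(5) st(3) st(4) by simp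
            have ab: "\<alpha> = \<beta>"
            proof (rule ccontr)
              assume ne: "\<alpha> \<noteq> \<beta>"
              have i: "n0 \<le> length \<sigma> - 1 \<and> length \<sigma> - 1 < m" using a(3,4) by linarith
              then have "the (q \<beta>) ! (length \<sigma> - 1) \<noteq> the (q \<alpha>) ! (length \<sigma> - 1)"
                using distq[rule_format, OF i a(1) b(1) ne[symmetric]] by simp
              then show False using eqv by simp
            qed
            have e1: "take (length \<sigma>) (w \<alpha>) = \<sigma>" using a(2) prefix_take_iff by blast
            have e2: "take (length \<tau>) (w \<alpha>) = \<tau>" using b(2) ab prefix_take_iff by blast
            show ?thesis using e1 e2 st(3) by metis
          next
            case N2: False
            have "\<alpha> \<in> dom q" using a(1) subq by blast
            moreover have "length \<sigma> - 1 < m" using a(3,4) by linarith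
            ultimately have vS: "the (q \<alpha>) ! (length \<sigma> - 1) \<in> S" by (rule qS)
            show ?thesis using SK[OF vS] GN[OF tP False2 N2] a(5) st(4) by simp
          qed
        next
          case N1: False
          show ?thesis
          proof (cases "isExt \<tau>")
            case E2: True
            obtain \<beta> where b: "\<beta>\<in>dom a0" "prefix \<tau> (w \<beta>)" "n0 < length \<tau>" "length \<tau> \<le> m"
              "G \<tau> = Some (the (q \<beta>) ! (length \<tau> - 1))" using GE[OF tP False2 E2] by blast
            have "\<beta> \<in> dom q" using b(1) subq by blast
            moreover have "length \<tau> - 1 < m" using b(3,4) by linarith
            ultimately have vS: "the (q \<beta>) ! (length \<tau> - 1) \<in> S" by (rule qS)
            show ?thesis using SK[OF vS] GN[OF sP False N1] b(5) st(4) by simp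
          next
            case N2: False
            have "Some (Kp + to_nat \<sigma>) = Some (Kp + to_nat \<tau>)"
              using GN[OF sP False N1] GN[OF tP False2 N2] st(4) by metis
            then have "to_nat \<sigma> = to_nat \<tau>" by simp
            then show ?thesis by (rule injD[OF inj_to_nat])
          qed
        qed
      qed
    qed
  qed
  have A2a: "the (A2 \<alpha>) = w \<alpha>" if "\<alpha> \<in> dom q" for \<alpha> using that unfolding A2_def by simp
  have B2old: "B2 \<alpha> = b0 \<alpha>" if "\<alpha> \<in> dom a0" for \<alpha> using that unfolding B2_def by simp
  have B2new: "B2 \<alpha> = Some (m+1)" if "\<alpha> \<in> dom q" "\<alpha> \<notin> dom a0" for \<alpha> using that unfolding B2_def by simp
  have b0n: "the (b0 \<alpha>) \<le> n0" if "\<alpha> \<in> dom a0" for \<alpha> using L0 that by blast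
  have B2b: "the (B2 \<alpha>) \<le> m+1" if "\<alpha> \<in> dom q" for \<alpha>
  proof (cases "\<alpha> \<in> dom a0")
    case True then show ?thesis using B2old[OF True] b0n[OF True] n0m by simp
  next
    case False then show ?thesis using B2new that by simp
  qed
  have D2: "r2 \<in> Dset"
  proof -
    have finG: "finite (dom G)"
    proof -
      have "dom G = (\<Union>\<alpha>\<in>dom q. {\<sigma>. prefix \<sigma> (w \<alpha>)})" unfolding dG Prefs_def by blast
      then show ?thesis using finq pfin by simp
    qed
    have Rs: "(A2,B2,Some G) \<in> Rset" unfolding Rset_def using finq dA2 dB2 finG Ginj by auto
    have ne: "dom A2 \<noteq> {}" using dA2 subq ne0 by blast
    have ex: "\<forall>\<alpha>\<in>dom A2. length (the (A2 \<alpha>)) = m+1 \<and> the (B2 \<alpha>) \<le> m+1" using dA2 A2a lw B2b by simp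
    have "inj_on (\<lambda>\<alpha>. the (A2 \<alpha>)) (dom q) = inj_on w (dom q)" by (rule inj_on_cong) (simp add: A2a)
    then have inj: "inj_on (\<lambda>\<alpha>. the (A2 \<alpha>)) (dom A2)" using winj dA2 by simp
    have "\<forall>\<alpha>\<in>dom q. the (A2 \<alpha>) = w \<alpha>" using A2a by blast
    then have "{\<sigma>. \<exists>\<alpha>\<in>dom q. prefix \<sigma> (the (A2 \<alpha>))} = Prefs" unfolding Prefs_def by (simp cong: bex_cong)
    then have dG': "dom (the (Some G)) = {\<sigma>. \<exists>\<alpha>\<in>dom A2. prefix \<sigma> (the (A2 \<alpha>))}"
      using dG dA2 by simp
    have "(A2,B2,Some G) \<in> Rset \<and> Some G \<noteq> None \<and> dom A2 \<noteq> {} \<and> dom A2 = dom B2 \<and>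
     (\<exists>n. (\<forall>\<alpha>\<in>dom A2. length (the (A2 \<alpha>)) = n \<and> the (B2 \<alpha>) \<le> n) \<and>
          inj_on (\<lambda>\<alpha>. the (A2 \<alpha>)) (dom A2) \<and>
          dom (the (Some G)) = {\<sigma>. \<exists>\<alpha>\<in>dom A2. prefix \<sigma> (the (A2 \<alpha>))})"
      (is ?X) using Rs ne dA2 dB2 ex inj dG' by blast
    have "r2 \<in> Dset \<longleftrightarrow> ?X" unfolding r2_def Dset_def by (simp only: mem_Collect_eq prod.case)
    then show ?thesis using \<open>?X\<close> by blast
  qed
  have R2: "R_le r2 (a0,b0,t0)"
  proof -
    have "f0 \<subseteq>\<^sub>m G" unfolding map_le_def using Gf0 by simp
    moreover have "dom a0 \<subseteq> dom A2" using dA2 subq by simp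
    moreover have "dom b0 \<subseteq> dom B2" using dB2 subq db0 by simp
    moreover have "\<forall>\<alpha>\<in>dom a0. prefix (the (a0 \<alpha>)) (the (A2 \<alpha>))"
    proof
      fix \<alpha> assume a: "\<alpha> \<in> dom a0"
      then have "\<alpha> \<in> dom q" using subq by blast
      then show "prefix (the (a0 \<alpha>)) (the (A2 \<alpha>))" using pold[OF a] A2a by simp
    qed
    moreover have "\<forall>\<alpha>\<in>dom b0. b0 \<alpha> = B2 \<alpha>" using B2old db0 by simp
    ultimately show ?thesis unfolding r2_def R_le_def f0 by simp
  qed
  have n2: "n_of r2 = m+1"
  proof -
    obtain \<alpha> where a: "\<alpha> \<in> dom a0" using ne0 by blast
    then have aq: "\<alpha> \<in> dom q" using subq by blast
    have "length (the (A2 \<alpha>)) = n_of r2" using Dset_n[OF D2[unfolded r2_def]] dA2 aq r2_def by simp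
    then show ?thesis using A2a[OF aq] lw[OF aq] by simp
  qed
  define F2 where "F2 \<alpha> i = (if i < the (B2 \<alpha>) then the (A2 \<alpha>) ! i
                         else the (G (take (i + 1) (the (A2 \<alpha>)))))" for \<alpha> i
  define Q2 where "Q2 = (\<lambda>\<alpha>. if \<alpha> \<in> dom A2 then Some (map (F2 \<alpha>) [0..<m+1]) else None)"
  have n2': "n_of (A2,B2,Some G) = m+1" using n2 unfolding r2_def .
  have PP2: "Proj r2 = (Q2, m+1)" unfolding r2_def Proj_eq n2' Q2_def F2_def by (rule refl)
  have F2q: "F2 \<alpha> i = the (q \<alpha>) ! i" if aq: "\<alpha> \<in> dom q" and im: "i < m" for \<alpha> i
  proof (cases "\<alpha> \<in> dom a0")
    case False
    have "F2 \<alpha> i = w \<alpha> ! i" unfolding F2_def using B2new[OF aq False] A2a[OF aq] im by simp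
    then show ?thesis using wB[OF False] lq aq im by (simp add: nth_append)
  next
    case True
    have la: "length (the (a0 \<alpha>)) = n0" using L0 True by blast
    show ?thesis
    proof (cases "i < the (b0 \<alpha>)")
      case ib: True
      have i0: "i < n0" using ib b0n[OF True] by simp
      have "F2 \<alpha> i = w \<alpha> ! i" unfolding F2_def using B2old[OF True] A2a[OF aq] ib by simp
      also have "\<dots> = the (a0 \<alpha>) ! i" using wA[OF True] la i0 by (simp add: nth_append)
      also have "\<dots> = F0 \<alpha> i" unfolding F0_def using ib by simp
      finally show ?thesis using F0q[OF True i0] by simp
    next
      case ib: False
      have F2G: "F2 \<alpha> i = the (G (take (i+1) (w \<alpha>)))" unfolding F2_def using B2old[OF True] A2a[OF aq] ib by simp
      show ?thesis
      proof (cases "i < n0")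
        case i0: True
        have tk: "take (i+1) (w \<alpha>) = take (i+1) (the (a0 \<alpha>))" using wA[OF True] la i0 by simp
        have "take (i+1) (the (a0 \<alpha>)) \<in> dom f0" unfolding domf0 using True take_is_prefix by blast
        then have "F2 \<alpha> i = F0 \<alpha> i" using F2G tk Gf0 ib unfolding F0_def by simp
        then show ?thesis using F0q[OF True i0] by simp
      next
        case i0: False
        then show ?thesis using F2G Gext[OF True _ im] by simp
      qed
    qed
  qed
  have F2top: "F2 \<alpha> m = (if \<alpha> \<in> dom a0 then Kp + to_nat (w \<alpha>) else Suc (h \<alpha>))" if aq: "\<alpha> \<in> dom q" for \<alpha>
  proof (cases "\<alpha> \<in> dom a0")
    case True
    have "\<not> m < the (b0 \<alpha>)" using b0n[OF True] n0m by simp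
    then have "F2 \<alpha> m = the (G (take (m+1) (w \<alpha>)))" unfolding F2_def using B2old[OF True] A2a[OF aq] by simp
    also have "take (m+1) (w \<alpha>) = w \<alpha>" using lw[OF aq] by simp
    finally show ?thesis using Gtop[OF True] True by simp
  next
    case False
    have "F2 \<alpha> m = w \<alpha> ! m" unfolding F2_def using B2new[OF aq False] A2a[OF aq] by simp
    then show ?thesis using wB[OF False] lq aq False by (simp add: nth_append)
  qed
  have Q2a: "the (Q2 \<alpha>) = map (F2 \<alpha>) [0..<m] @ [F2 \<alpha> m]" if aq: "\<alpha> \<in> dom q" for \<alpha>
    unfolding Q2_def using aq dA2 by simp
  have P2: "P_le (Proj r2) (q,m)"
  proof -
    have "dom q \<subseteq> dom Q2" unfolding Q2_def dA2 by (auto simp: domIff)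
    moreover have "\<forall>\<alpha>\<in>dom q. prefix (the (q \<alpha>)) (the (Q2 \<alpha>))"
    proof
      fix \<alpha> assume aq: "\<alpha> \<in> dom q"
      have "map (F2 \<alpha>) [0..<m] = the (q \<alpha>)"
        by (rule nth_equalityI) (use lq aq F2q[OF aq] in auto)
      then show "prefix (the (q \<alpha>)) (the (Q2 \<alpha>))" using Q2a[OF aq] by (simp add: prefixI)
    qed
    moreover have "\<forall>i. m \<le> i \<and> i < m+1 \<longrightarrow> (\<forall>\<alpha>\<in>dom q. \<forall>\<beta>\<in>dom q. \<beta> \<noteq> \<alpha> \<longrightarrow>
         the (Q2 \<beta>) ! i \<noteq> the (Q2 \<alpha>) ! i)"
    proof (intro allI impI ballI)
      fix i \<alpha> \<beta> assume i: "m \<le> i \<and> i < m+1" and a: "\<alpha> \<in> dom q" and b: "\<beta> \<in> dom q" and ne: "\<beta> \<noteq> \<alpha>"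
      have im: "i = m" using i by simp
      have e: "the (Q2 \<gamma>) ! m = F2 \<gamma> m" if "\<gamma> \<in> dom q" for \<gamma> using Q2a[OF that] by (simp add: nth_append)
      have hS: "Suc (h \<gamma>) < Kp" if "\<gamma> \<in> dom q" for \<gamma> using SK that unfolding S_def by blast
      show "the (Q2 \<beta>) ! i \<noteq> the (Q2 \<alpha>) ! i"
        unfolding im e[OF a] e[OF b] F2top[OF a] F2top[OF b]
      proof (cases "\<alpha> \<in> dom a0"; cases "\<beta> \<in> dom a0")
        assume "\<alpha> \<in> dom a0" "\<beta> \<in> dom a0"
        moreover have "w \<beta> \<noteq> w \<alpha>" using winj a b ne by (meson inj_onD)
        ultimately show "(if \<beta> \<in> dom a0 then Kp + to_nat (w \<beta>) else Suc (h \<beta>)) \<noteq>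
          (if \<alpha> \<in> dom a0 then Kp + to_nat (w \<alpha>) else Suc (h \<alpha>))" by (simp add: inj_eq)
      next
        assume "\<alpha> \<in> dom a0" "\<beta> \<notin> dom a0"
        then show "(if \<beta> \<in> dom a0 then Kp + to_nat (w \<beta>) else Suc (h \<beta>)) \<noteq>
          (if \<alpha> \<in> dom a0 then Kp + to_nat (w \<alpha>) else Suc (h \<alpha>))" using hS[OF b] by simp
      next
        assume "\<alpha> \<notin> dom a0" "\<beta> \<in> dom a0"
        then show "(if \<beta> \<in> dom a0 then Kp + to_nat (w \<beta>) else Suc (h \<beta>)) \<noteq>
          (if \<alpha> \<in> dom a0 then Kp + to_nat (w \<alpha>) else Suc (h \<alpha>))" using hS[OF a] by simp
      next
        assume "\<alpha> \<notin> dom a0" "\<beta> \<notin> dom a0"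
        moreover have "h \<beta> \<noteq> h \<alpha>" using h a b ne by (meson inj_onD)
        ultimately show "(if \<beta> \<in> dom a0 then Kp + to_nat (w \<beta>) else Suc (h \<beta>)) \<noteq>
          (if \<alpha> \<in> dom a0 then Kp + to_nat (w \<alpha>) else Suc (h \<alpha>))" by simp
      qed
    qed
    ultimately show ?thesis unfolding PP2 P_le_def by simp
  qed
  show ?thesis using D2 R2 P2 by blast
qed

theorem claim3:
  assumes "is_omega2_type TYPE('a)"
  shows "(\<forall>r0 r1 :: 'a Rcond. r0 \<in> Dset \<and> r1 \<in> Dset \<and> R_le r1 r0 \<longrightarrow>
            P_le (Proj r1) (Proj r0))
       \<and> (\<forall>(r0 :: 'a Rcond) p1. r0 \<in> Dset \<and> p1 \<in> Pneq \<and> P_le p1 (Proj r0) \<longrightarrow>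
            (\<exists>r2\<in>Dset. R_le r2 r0 \<and> P_le (Proj r2) p1))"
proof (intro conjI allI impI)
  fix r0 r1 :: "'a Rcond" assume H: "r0 \<in> Dset \<and> r1 \<in> Dset \<and> R_le r1 r0"
  obtain a0 b0 t0 where e0: "r0 = (a0,b0,t0)" by (cases r0) auto
  obtain a1 b1 t1 where e1: "r1 = (a1,b1,t1)" by (cases r1) auto
  show "P_le (Proj r1) (Proj r0)" using part1[of a0 b0 t0 a1 b1 t1] H unfolding e0 e1 by blast
next
  fix r0 :: "'a Rcond" and p1 assume H: "r0 \<in> Dset \<and> p1 \<in> Pneq \<and> P_le p1 (Proj r0)"
  obtain a0 b0 t0 where e0: "r0 = (a0,b0,t0)" by (cases r0) auto
  obtain q m where e1: "p1 = (q,m)" by (cases p1) auto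
  show "\<exists>r2\<in>Dset. R_le r2 r0 \<and> P_le (Proj r2) p1" using part2[of a0 b0 t0 q m] H unfolding e0 e1 by blast
qed

end
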